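(* Let $\alpha_1\in(0,1)$ be irrational and define $\alpha_{n+1}=1-\left\lfloor \frac{1}{\alpha_n}\right\rfloor\alpha_n$ for $n=1,2,\ldots$, where $\lfloor\cdot\rfloor$ is the floor function. Then $\lim_{n\to\infty}\alpha_n=0$. *)

theory Defs
  imports Complex_Main
begin

end

theory Submission
  imports Defs
begin

theorem lemma2p3:
  fixes \<alpha> :: "nat \<Rightarrow> real"
  assumes "0 < \<alpha> 1" and "\<alpha> 1 < 1"
    and "\<alpha> 1 \<notin> \<rat>"
    and "\<And>n. n \<ge> 1 \<Longrightarrow> \<alpha> (Suc n) = 1 - of_int \<lfloor>1 / \<alpha> n\<rfloor> * \<alpha> n"
  shows "\<alpha> \<longlonglongrightarrow> 0"
proof -
  define k where "k n = \<lfloor>1 / \<alpha> n\<rfloor>" for n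
  have rec: "\<alpha> (Suc n) = 1 - of_int (k n) * \<alpha> n" if "n \<ge> 1" for n
    using assms(4)[OF that] by (simp add: k_def)
  have P: "0 < \<alpha> n \<and> \<alpha> n < 1 \<and> \<alpha> n \<notin> \<rat>" if "n \<ge> 1" for n
    using that
  proof (induction n rule: dec_induct)
    case base then show ?case using assms by auto
  next
    case (step n)
    let ?a = "\<alpha> n"
    have a: "0 < ?a" "?a < 1" "?a \<notin> \<rat>" using step by auto
    have k1: "of_int (k n) \<le> 1 / ?a" "1 / ?a < of_int (k n) + 1"
      unfolding k_def by linarith+
    have kk: "of_int (k n) * ?a \<le> 1" using k1(1) a(1) by (simp add: field_simps)
    have kk2: "1 < (of_int (k n) + 1) * ?a" using k1(2) a(1) by (simp add: field_simps)
    have kpos: "k n \<ge> 1" using a unfolding k_def by (simp add: one_le_floor field_simps)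
    have e: "\<alpha> (Suc n) = 1 - of_int (k n) * ?a" using rec step by auto
    have irr: "\<alpha> (Suc n) \<notin> \<rat>"
    proof
      assume "\<alpha> (Suc n) \<in> \<rat>"
      hence "(1 - \<alpha> (Suc n)) / of_int (k n) \<in> \<rat>" by auto
      moreover have "(1 - \<alpha> (Suc n)) / of_int (k n) = ?a" using e kpos by simp
      ultimately show False using a by simp
    qed
    have ne: "\<alpha> (Suc n) \<noteq> 0" using irr by auto
    show ?case using e kk kk2 ne irr a by (auto simp: algebra_simps)
  qed
  have dec: "\<alpha> (Suc n) < \<alpha> n" if "n \<ge> 1" for n
  proof -
    have k1: "1 / \<alpha> n < of_int (k n) + 1" unfolding k_def by linarith
    hence "1 < (of_int (k n) + 1) * \<alpha> n" using P[OF that] by (simp add: field_simps)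
    thus ?thesis using rec[OF that] by (simp add: algebra_simps)
  qed
  have kpos: "k n \<ge> 1" if "n \<ge> 1" for n
    using P[OF that] unfolding k_def by (simp add: one_le_floor field_simps)
  have kinc: "k n < k (Suc n)" if "n \<ge> 1" for n
  proof -
    have "1 / \<alpha> n < 1 / \<alpha> (Suc n)" using dec[OF that] P[OF that] P[of "Suc n"] that
      by (simp add: frac_less2)
    hence le: "k n \<le> k (Suc n)" unfolding k_def by (intro floor_mono) simp
    show ?thesis
    proof (rule ccontr)
      assume "\<not> ?thesis"
      hence eq: "k (Suc n) = k n" using le by simp
      have "\<alpha> (Suc (Suc n)) - \<alpha> (Suc n) = - of_int (k n) * (\<alpha> (Suc n) - \<alpha> n)"
        using rec[OF that] rec[of "Suc n"] that eq by (simp add: algebra_simps)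
      moreover have "- of_int (k n) * (\<alpha> (Suc n) - \<alpha> n) > 0"
        using dec[OF that] kpos[OF that] by (simp add: mult_pos_neg)
      moreover have "\<alpha> (Suc (Suc n)) < \<alpha> (Suc n)" using dec[of "Suc n"] that by simp
      ultimately show False by simp
    qed
  qed
  have kge: "k n \<ge> int n" if "n \<ge> 1" for n
    using that
  proof (induction n rule: dec_induct)
    case base then show ?case using kpos[of 1] by simp
  next
    case (step n) then show ?case using kinc[of n] by simp
  qed
  have bound: "\<alpha> n \<le> 1 / real n" if "n \<ge> 1" for n
  proof -
    have "of_int (k n) \<le> 1 / \<alpha> n" unfolding k_def by linarith
    hence "real n \<le> 1 / \<alpha> n" using kge[OF that] by linarith
    thus ?thesis using P[OF that] that by (simp add: field_simps)
  qed
  show ?thesis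
  proof (rule real_tendsto_sandwich[where f="\<lambda>_. 0" and h="\<lambda>n. 1 / real n"])
    show "\<forall>\<^sub>F n in sequentially. 0 \<le> \<alpha> n"
      using eventually_ge_at_top[of 1] by eventually_elim (use P in force)
    show "\<forall>\<^sub>F n in sequentially. \<alpha> n \<le> 1 / real n"
      using eventually_ge_at_top[of 1] by eventually_elim (use bound in auto)
    show "(\<lambda>_. 0) \<longlonglongrightarrow> (0::real)" by simp
    show "(\<lambda>n. 1 / real n) \<longlonglongrightarrow> 0" by (rule lim_const_over_n)
  qed
qed

end
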